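(* Let $\Xi$ be a finite measure on $\Delta$, let $\gamma$ be as in the context, and let $\kappa\in[0,\infty)$. The following five conditions are equivalent: (i) $\lim_{x\to\infty}x\gamma''(x)=\kappa$; (ii) $\lim_{x\to\infty}\big(\gamma'(x)-\gamma(x)/x\big)=\kappa$; (iii) there exists a function $L:(0,\infty)\to(0,\infty)$, slowly varying at $\infty$, such that $\gamma(x)/x=\kappa\log x+\log L(x)$ for all $x>0$; (iv) for every $y>0$, $\lim_{x\to\infty}\big(\gamma(yx)/(yx)-\gamma(x)/x\big)=\kappa\log y$; (v) for every $y>0$, $\lim_{x\to\infty}\big(\gamma'(yx)-\gamma'(x)\big)=\kappa\log y$.
   Context: Let $\Delta:=\{u=(u_1,u_2,\ldots):u_1\ge u_2\ge\cdots\ge0,\ \sum_{i\ge1}u_i\le1\}$, and for $u\in\Delta$ write $|u|:=\sum_{i\ge1}u_i$, $(u,u):=\sum_{i\ge1}u_i^2$, and $0:=(0,0,\ldots)$. Let $\Xi$ be a finite measure on $\Delta$, $a:=\Xi(\{0\})$, $\Xi_0:=\Xi-a\delta_0$, and $\nu(\mathrm du):=\Xi_0(\mathrm du)/(u,u)$ on $\Delta\setminus\{0\}$. Define $\gamma:[0,\infty)\to\mathbb R$ by $$\gamma(x):=a\frac{x(x-1)}{2}+\int_\Delta\sum_{i\ge1}\big((1-u_i)^x-1+xu_i\big)\,\nu(\mathrm du),\qquad x\ge0.$$ The function $\gamma$ is infinitely differentiable on $(0,\infty)$. *)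

theory Defs
  imports "HOL-Analysis.Analysis"
begin

text \<open>The simplex Delta of nonincreasing nonnegative sequences with total mass at most 1
  (indices start at 0 instead of 1).\<close>
definition Delta :: "(nat \<Rightarrow> real) set" where
  "Delta = {u. (\<forall>i. u (Suc i) \<le> u i) \<and> (\<forall>i. 0 \<le> u i) \<and> summable u \<and> suminf u \<le> 1}"

definition Delta_sets :: "(nat \<Rightarrow> real) set set" where
  "Delta_sets = sets (restrict_space (Pi\<^sub>M UNIV (\<lambda>_. borel)) Delta)"

definition zero_seq :: "nat \<Rightarrow> real" where
  "zero_seq = (\<lambda>_. 0)"

definition sqnorm :: "(nat \<Rightarrow> real) \<Rightarrow> real" where
  "sqnorm u = (\<Sum>i. (u i)\<^sup>2)"

text \<open>(1-t)^x with the convention 0^0 = 1.\<close>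
definition pow0 :: "real \<Rightarrow> real \<Rightarrow> real" where
  "pow0 b x = (if x = 0 then 1 else b powr x)"

text \<open>gamma(x) = a x(x-1)/2 + int sum_i ((1-u_i)^x - 1 + x u_i) nu(du),
  with a = Xi({0}) and nu(du) = Xi_0(du)/(u,u) on Delta minus {0}.\<close>
definition gamma :: "(nat \<Rightarrow> real) measure \<Rightarrow> real \<Rightarrow> real" where
  "gamma Xi x = measure Xi {zero_seq} * (x * (x - 1) / 2)
     + set_lebesgue_integral Xi (Delta - {zero_seq})
         (\<lambda>u. (\<Sum>i. pow0 (1 - u i) x - 1 + x * u i) / sqnorm u)"

definition slowly_varying :: "(real \<Rightarrow> real) \<Rightarrow> bool" where
  "slowly_varying L \<longleftrightarrow> (\<forall>x>0. 0 < L x) \<and>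
     (\<forall>y>0. ((\<lambda>x. L (y * x) / L x) \<longlongrightarrow> 1) at_top)"

end

theory Submission
  imports Defs
begin

lemma diff_shift_tendsto:
  fixes Q Q' :: "real \<Rightarrow> real"
  assumes d: "\<And>s. (Q has_real_derivative Q' s) (at s)" and l: "(Q' \<longlongrightarrow> 0) at_top"
  shows "((\<lambda>s. Q (s + c) - Q s) \<longlongrightarrow> 0) at_top"
proof (rule tendstoI)
  fix e :: real assume e: "e > 0"
  have "e / (\<bar>c\<bar> + 1) > 0" using e by simp
  then have "\<forall>\<^sub>F s in at_top. dist (Q' s) 0 < e / (\<bar>c\<bar> + 1)" using l tendstoD by blast
  then obtain S where S: "\<And>s. s \<ge> S \<Longrightarrow> \<bar>Q' s\<bar> < e / (\<bar>c\<bar> + 1)"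
    by (auto simp: eventually_at_top_linorder)
  have ce: "\<bar>c\<bar> * (e / (\<bar>c\<bar> + 1)) < e"
  proof -
    have "\<bar>c\<bar> * (e / (\<bar>c\<bar> + 1)) = e * (\<bar>c\<bar> / (\<bar>c\<bar> + 1))" by simp
    also have "\<dots> < e * 1" using e by (intro mult_strict_left_mono) auto
    finally show ?thesis by simp
  qed
  have "\<forall>\<^sub>F s in at_top. s \<ge> S + \<bar>c\<bar>" by (rule eventually_ge_at_top)
  then show "\<forall>\<^sub>F s in at_top. dist (Q (s + c) - Q s) 0 < e"
  proof eventually_elim
    case (elim s)
    consider "c = 0" | "c > 0" | "c < 0" by linarith
    then show ?case
    proof cases
      case 1 then show ?thesis using e by simp
    next
      case 2
      obtain z where z: "s < z" "z < s + c" "Q (s + c) - Q s = (s + c - s) * Q' z"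
        using MVT2[of s "s + c" Q Q'] 2 d by auto
      have "\<bar>Q' z\<bar> < e / (\<bar>c\<bar> + 1)" using S[of z] z elim by simp
      then have "\<bar>c\<bar> * \<bar>Q' z\<bar> \<le> \<bar>c\<bar> * (e / (\<bar>c\<bar> + 1))" by (intro mult_left_mono) auto
      then show ?thesis using z(3) ce by (simp add: dist_real_def abs_mult)
    next
      case 3
      obtain z where z: "s + c < z" "z < s" "Q s - Q (s + c) = (s - (s + c)) * Q' z"
        using MVT2[of "s + c" s Q Q'] 3 d by auto
      have "\<bar>Q' z\<bar> < e / (\<bar>c\<bar> + 1)" using S[of z] z elim by simp
      then have "\<bar>c\<bar> * \<bar>Q' z\<bar> \<le> \<bar>c\<bar> * (e / (\<bar>c\<bar> + 1))" by (intro mult_left_mono) auto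
      then show ?thesis using z(3) ce by (simp add: dist_real_def abs_mult abs_minus_commute)
    qed
  qed
qed

lemma log_mvt:
  fixes A A' :: "real \<Rightarrow> real"
  assumes d: "\<And>t. t > 0 \<Longrightarrow> (A has_real_derivative A' t) (at t)"
    and l: "((\<lambda>t. t * A' t) \<longlongrightarrow> \<kappa>) at_top" and y: "y > 0"
  shows "((\<lambda>x. A (y * x) - A x) \<longlongrightarrow> \<kappa> * ln y) at_top"
proof -
  define Q where "Q s = A (exp s) - \<kappa> * s" for s
  define Q' where "Q' s = exp s * A' (exp s) - \<kappa>" for s
  have dQ: "(Q has_real_derivative Q' s) (at s)" for s
  proof -
    have "((A \<circ> exp) has_real_derivative A' (exp s) * exp s) (at s)"
      by (rule DERIV_chain) (auto intro: d DERIV_exp)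
    then have "((\<lambda>s. A (exp s)) has_real_derivative A' (exp s) * exp s) (at s)" by (simp add: o_def)
    then show ?thesis unfolding Q_def Q'_def
      by (auto intro!: derivative_eq_intros simp: mult.commute)
  qed
  have lQ: "(Q' \<longlongrightarrow> 0) at_top"
  proof -
    have "((\<lambda>s. exp s * A' (exp s)) \<longlongrightarrow> \<kappa>) at_top"
      using filterlim_compose[OF l exp_at_top] by (simp add: o_def)
    then have "((\<lambda>s. exp s * A' (exp s) - \<kappa>) \<longlongrightarrow> \<kappa> - \<kappa>) at_top" by (intro tendsto_diff) auto
    moreover have "Q' = (\<lambda>s. exp s * A' (exp s) - \<kappa>)" by (simp add: fun_eq_iff Q'_def)
    ultimately show ?thesis by simp
  qed
  have "((\<lambda>s. Q (s + ln y) - Q s) \<longlongrightarrow> 0) at_top" by (rule diff_shift_tendsto[OF dQ lQ])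
  then have "((\<lambda>x. Q (ln x + ln y) - Q (ln x)) \<longlongrightarrow> 0) at_top"
    using filterlim_compose[OF _ ln_at_top] by blast
  then have "((\<lambda>x. Q (ln x + ln y) - Q (ln x) + \<kappa> * ln y) \<longlongrightarrow> 0 + \<kappa> * ln y) at_top"
    by (intro tendsto_add) auto
  moreover have "\<forall>\<^sub>F x in at_top. Q (ln x + ln y) - Q (ln x) + \<kappa> * ln y = A (y * x) - A x"
    using eventually_gt_at_top[of 0]
  proof eventually_elim
    case (elim x)
    then have "exp (ln x + ln y) = y * x" using y by (simp add: exp_add)
    then show ?case using elim by (simp add: Q_def algebra_simps)
  qed
  ultimately show ?thesis by (simp add: tendsto_cong)
qed

lemma taub_generic:
  fixes B :: "real \<Rightarrow> real" and \<kappa> :: real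
  assumes k: "0 \<le> \<kappa>"
  and lo_b: "\<And>y. y > 1 \<Longrightarrow> \<forall>\<^sub>F x in at_top. Lo y x \<le> B x"
  and up_b: "\<And>y. y > 1 \<Longrightarrow> \<forall>\<^sub>F x in at_top. B x \<le> Up y x"
  and lo_l: "\<And>y. y > 1 \<Longrightarrow> (Lo y \<longlongrightarrow> lo y) at_top"
  and up_l: "\<And>y. y > 1 \<Longrightarrow> (Up y \<longlongrightarrow> up y) at_top"
  and lo_ge: "\<And>y. y > 1 \<Longrightarrow> \<kappa> / y \<le> lo y"
  and up_le: "\<And>y. y > 1 \<Longrightarrow> up y \<le> \<kappa> * y"
  shows "(B \<longlongrightarrow> \<kappa>) at_top"
proof (rule order_tendstoI)
  fix a assume a: "a < \<kappa>"
  define d where "d = (\<kappa> - a) / (2 * (\<kappa> + 1))"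
  have d0: "d > 0" using a k by (simp add: d_def)
  have kd: "\<kappa> * d < \<kappa> - a"
  proof -
    have "\<kappa> * d = (\<kappa> - a) * (\<kappa> / (2 * (\<kappa> + 1)))" by (simp add: d_def)
    moreover have "\<kappa> / (2 * (\<kappa> + 1)) < 1" using k by simp
    ultimately show ?thesis using a by (metis diff_gt_0_iff_gt mult.right_neutral mult_strict_left_mono)
  qed
  define y where "y = 1 + d"
  have y1: "y > 1" using d0 by (simp add: y_def)
  have "(2 - y) * y \<le> 1" unfolding y_def by (simp add: algebra_simps)
  then have "\<kappa> * (2 - y) * y \<le> \<kappa>" using k by (metis mult.assoc mult_left_mono mult.right_neutral)
  then have "\<kappa> * (2 - y) \<le> \<kappa> / y" using y1 by (simp add: pos_le_divide_eq)
  moreover have "a < \<kappa> * (2 - y)" using kd by (simp add: y_def algebra_simps)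
  ultimately have "a < lo y" using lo_ge[OF y1] by linarith
  then have "\<forall>\<^sub>F x in at_top. a < Lo y x" using lo_l[OF y1] order_tendstoD(1) by blast
  then show "\<forall>\<^sub>F x in at_top. a < B x" using lo_b[OF y1] by eventually_elim simp
next
  fix a assume a: "\<kappa> < a"
  define d where "d = (a - \<kappa>) / (2 * (\<kappa> + 1))"
  have d0: "d > 0" using a k by (simp add: d_def)
  have kd: "\<kappa> * d < a - \<kappa>"
  proof -
    have "\<kappa> * d = (a - \<kappa>) * (\<kappa> / (2 * (\<kappa> + 1)))" by (simp add: d_def)
    moreover have "\<kappa> / (2 * (\<kappa> + 1)) < 1" using k by simp
    ultimately show ?thesis using a by (metis diff_gt_0_iff_gt mult.right_neutral mult_strict_left_mono)
  qed
  define y where "y = 1 + d"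
  have y1: "y > 1" using d0 by (simp add: y_def)
  have "\<kappa> * y < a" using kd by (simp add: y_def algebra_simps)
  then have "up y < a" using up_le[OF y1] by linarith
  then have "\<forall>\<^sub>F x in at_top. Up y x < a" using up_l[OF y1] order_tendstoD(2) by blast
  then show "\<forall>\<^sub>F x in at_top. B x < a" using up_b[OF y1] by eventually_elim simp
qed


lemma ln_bounds:
  fixes y :: real assumes "y > 1"
  shows "(y - 1) / y \<le> ln y" "ln y \<le> y - 1"
proof -
  show "ln y \<le> y - 1" using assms by (intro ln_le_minus_one) simp
  have "ln (1 / y) \<le> 1 / y - 1" using assms by (intro ln_le_minus_one) simp
  then have "- ln y \<le> 1 / y - 1" using assms by (simp add: ln_div)
  then show "(y - 1) / y \<le> ln y" using assms by (simp add: diff_divide_distrib)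
qed

lemma lo_up_bounds:
  fixes y \<kappa> :: real assumes y: "y > 1" and k: "\<kappa> \<ge> 0"
  shows "\<kappa> / y \<le> \<kappa> * ln y / (y - 1)" "\<kappa> * ln y * (y / (y - 1)) \<le> \<kappa> * y"
proof -
  have y1: "y - 1 > 0" using y by simp
  have "\<kappa> * ((y - 1) / y) \<le> \<kappa> * ln y" using ln_bounds(1)[OF y] k by (intro mult_left_mono)
  then have "\<kappa> * ((y - 1) / y) / (y - 1) \<le> \<kappa> * ln y / (y - 1)" using y1 by (intro divide_right_mono) auto
  then show "\<kappa> / y \<le> \<kappa> * ln y / (y - 1)" using y1 by simp
  have "\<kappa> * ln y \<le> \<kappa> * (y - 1)" using ln_bounds(2)[OF y] k by (intro mult_left_mono)
  then have "\<kappa> * ln y * (y / (y - 1)) \<le> \<kappa> * (y - 1) * (y / (y - 1))" using y1 y by (intro mult_right_mono) auto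
  then show "\<kappa> * ln y * (y / (y - 1)) \<le> \<kappa> * y" using y1 by simp
qed

lemma at_top_div_const:
  fixes y :: real assumes "y > 0"
  shows "filterlim (\<lambda>x. x / y) at_top at_top"
proof -
  have "filterlim (\<lambda>x. (1 / y) * x) at_top at_top"
    by (rule filterlim_tendsto_pos_mult_at_top[OF tendsto_const]) (use assms in \<open>auto intro: filterlim_ident\<close>)
  then show ?thesis by simp
qed

lemma at_top_mult_const:
  fixes y :: real assumes "y > 0"
  shows "filterlim (\<lambda>x. y * x) at_top at_top"
  by (rule filterlim_tendsto_pos_mult_at_top[OF tendsto_const]) (use assms in \<open>auto intro: filterlim_ident\<close>)

lemma shift_back:
  fixes F :: "real \<Rightarrow> real" assumes "((\<lambda>x. F (y * x) - F x) \<longlongrightarrow> c) at_top" "y > 0"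
  shows "((\<lambda>x. F x - F (x / y)) \<longlongrightarrow> c) at_top"
proof -
  have "((\<lambda>x. F (y * (x / y)) - F (x / y)) \<longlongrightarrow> c) at_top"
    using filterlim_compose[OF assms(1) at_top_div_const[OF assms(2)]] by simp
  then show ?thesis using assms(2) by simp
qed

lemma shift_fwd:
  fixes F :: "real \<Rightarrow> real" assumes "(F \<longlongrightarrow> c) at_top" "y > 0"
  shows "((\<lambda>x. F (y * x)) \<longlongrightarrow> c) at_top"
  using filterlim_compose[OF assms(1) at_top_mult_const[OF assms(2)]] by simp



lemma partB:
  fixes g g1 g2 :: "real \<Rightarrow> real" and \<kappa> :: real
  assumes k: "0 \<le> \<kappa>"
  and d1: "\<And>x. x > 0 \<Longrightarrow> (g has_real_derivative g1 x) (at x)"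
  and d2: "\<And>x. x > 0 \<Longrightarrow> (g1 has_real_derivative g2 x) (at x)"
  and nn: "\<And>x. x > 0 \<Longrightarrow> 0 \<le> g2 x"
  and mono: "\<And>x y. 0 < x \<Longrightarrow> x \<le> y \<Longrightarrow> g2 y \<le> g2 x"
  shows "(((\<lambda>x. x * g2 x) \<longlongrightarrow> \<kappa>) at_top
           \<longleftrightarrow> ((\<lambda>x. g1 x - g x / x) \<longlongrightarrow> \<kappa>) at_top)
       \<and> (((\<lambda>x. g1 x - g x / x) \<longlongrightarrow> \<kappa>) at_top
           \<longleftrightarrow> (\<exists>L. slowly_varying L \<and> (\<forall>x>0. g x / x = \<kappa> * ln x + ln (L x))))
       \<and> ((\<exists>L. slowly_varying L \<and> (\<forall>x>0. g x / x = \<kappa> * ln x + ln (L x)))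
           \<longleftrightarrow> (\<forall>y>0. ((\<lambda>x. g (y * x) / (y * x) - g x / x) \<longlongrightarrow> \<kappa> * ln y) at_top))
       \<and> ((\<forall>y>0. ((\<lambda>x. g (y * x) / (y * x) - g x / x) \<longlongrightarrow> \<kappa> * ln y) at_top)
           \<longleftrightarrow> (\<forall>y>0. ((\<lambda>x. g1 (y * x) - g1 x) \<longlongrightarrow> \<kappa> * ln y) at_top))"
proof -
  define h where "h t = g t / t" for t
  define \<phi> where "\<phi> t = g1 t - g t / t" for t
  define P where "P t = t * g1 t - g t" for t
  have P\<phi>: "P t = t * \<phi> t" if "t > 0" for t using that by (simp add: P_def \<phi>_def algebra_simps)
  have g1h: "g1 t = \<phi> t + h t" for t by (simp add: \<phi>_def h_def)
  have dh: "(h has_real_derivative \<phi> t / t) (at t)" if t: "t > 0" for t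
  proof -
    have "((\<lambda>t. g t / t) has_real_derivative (g1 t * t - g t * 1) / (t * t)) (at t)"
      using t by (intro derivative_eq_intros d1) (auto intro: d1)
    moreover have "(g1 t * t - g t * 1) / (t * t) = \<phi> t / t" using t by (simp add: \<phi>_def field_simps)
    ultimately show ?thesis by (simp add: h_def[abs_def])
  qed
  have dP: "(P has_real_derivative t * g2 t) (at t)" if t: "t > 0" for t
  proof -
    have "((\<lambda>t. t * g1 t - g t) has_real_derivative (1 * g1 t + t * g2 t - g1 t)) (at t)"
      using t by (intro derivative_eq_intros d1 d2) (auto intro: d1 d2)
    then show ?thesis by (simp add: P_def[abs_def])
  qed
  have Pmono: "P a \<le> P b" if "0 < a" "a \<le> b" for a b
    using that by (intro DERIV_nonneg_imp_nondecreasing[of a b P])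
      (auto intro!: exI[of _ "_ * g2 _"] dP nn mult_nonneg_nonneg)

  define C1 where "C1 \<longleftrightarrow> ((\<lambda>x. x * g2 x) \<longlongrightarrow> \<kappa>) at_top"
  define C2 where "C2 \<longleftrightarrow> (\<phi> \<longlongrightarrow> \<kappa>) at_top"
  define C3 where "C3 \<longleftrightarrow> (\<exists>L. slowly_varying L \<and> (\<forall>x>0. h x = \<kappa> * ln x + ln (L x)))"
  define C4 where "C4 \<longleftrightarrow> (\<forall>y>0. ((\<lambda>x. h (y * x) - h x) \<longlongrightarrow> \<kappa> * ln y) at_top)"
  define C5 where "C5 \<longleftrightarrow> (\<forall>y>0. ((\<lambda>x. g1 (y * x) - g1 x) \<longlongrightarrow> \<kappa> * ln y) at_top)"

  have 12: "C2" if "C1"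
  proof -
    have "((\<lambda>x. P x / x) \<longlongrightarrow> \<kappa>) at_top"
    proof (rule lhospital_at_top_at_top[where g' = "\<lambda>_. 1" and f' = "\<lambda>x. x * g2 x"])
      show "filterlim (\<lambda>x. x) at_top at_top" by (rule filterlim_ident)
      show "\<forall>\<^sub>F x in at_top. (P has_real_derivative x * g2 x) (at x)"
        using eventually_gt_at_top[of 0] by eventually_elim (rule dP)
      show "\<forall>\<^sub>F x in at_top. ((\<lambda>x. x) has_real_derivative 1) (at x)" by (auto intro: derivative_eq_intros)
      show "((\<lambda>x. x * g2 x / 1) \<longlongrightarrow> \<kappa>) at_top" using that by (simp add: C1_def)
    qed auto
    moreover have "\<forall>\<^sub>F x in at_top. P x / x = \<phi> x"
      using eventually_gt_at_top[of 0] by eventually_elim (simp add: P\<phi>)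
    ultimately show ?thesis unfolding C2_def using tendsto_cong by fastforce
  qed

  have 24: "C4" if "C2"
  proof -
    have "((\<lambda>t. t * (\<phi> t / t)) \<longlongrightarrow> \<kappa>) at_top"
    proof -
      have "\<forall>\<^sub>F t in at_top. \<phi> t = t * (\<phi> t / t)"
        using eventually_gt_at_top[of 0] by eventually_elim simp
      then show ?thesis using that unfolding C2_def using tendsto_cong by fastforce
    qed
    then show ?thesis unfolding C4_def using log_mvt[OF dh] by blast
  qed

  have 245: "C5" if "C2" "C4"
  proof -
    { fix y :: real assume y: "y > 0"
      have "((\<lambda>x. \<phi> (y * x) - \<phi> x) \<longlongrightarrow> \<kappa> - \<kappa>) at_top"
        using that(1) unfolding C2_def by (intro tendsto_diff shift_fwd y)
      moreover have "((\<lambda>x. h (y * x) - h x) \<longlongrightarrow> \<kappa> * ln y) at_top" using that(2) y unfolding C4_def by blast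
      ultimately have "((\<lambda>x. (\<phi> (y * x) - \<phi> x) + (h (y * x) - h x)) \<longlongrightarrow> (\<kappa> - \<kappa>) + \<kappa> * ln y) at_top"
        by (rule tendsto_add)
      then have "((\<lambda>x. g1 (y * x) - g1 x) \<longlongrightarrow> \<kappa> * ln y) at_top" by (simp add: g1h algebra_simps)
    }
    then show ?thesis unfolding C5_def by blast
  qed

  have 42: "C2" if "C4"
  proof -
    have hl: "((\<lambda>x. h (y * x) - h x) \<longlongrightarrow> \<kappa> * ln y) at_top" if "y > 1" for y
      using \<open>C4\<close> that unfolding C4_def by auto
    show ?thesis unfolding C2_def
    proof (rule taub_generic[OF k, where Lo = "\<lambda>y x. (h x - h (x / y)) / (y - 1)"
          and Up = "\<lambda>y x. (h (y * x) - h x) * (y / (y - 1))"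
          and lo = "\<lambda>y. \<kappa> * ln y / (y - 1)" and up = "\<lambda>y. \<kappa> * ln y * (y / (y - 1))"])
      fix y :: real assume y: "y > 1"
      define F where "F x t = h t + P x / t" for x t
      have dF: "(F x has_real_derivative (P t - P x) / (t * t)) (at t)" if "t > 0" "x > 0" for t x
      proof -
        have "(F x has_real_derivative \<phi> t / t + (0 * t - P x * 1) / (t * t)) (at t)"
          unfolding F_def[abs_def] using that by (intro derivative_eq_intros dh) (auto intro: dh)
        moreover have "\<phi> t / t + (0 * t - P x * 1) / (t * t) = (P t - P x) / (t * t)"
          using that by (simp add: P\<phi> field_simps)
        ultimately show ?thesis by simp
      qed
      show "\<forall>\<^sub>F x in at_top. (h x - h (x / y)) / (y - 1) \<le> \<phi> x"
        using eventually_gt_at_top[of 0]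
      proof eventually_elim
        case (elim x)
        have "F x x \<le> F x (x / y)"
        proof (rule DERIV_nonpos_imp_nonincreasing[of "x / y" x "F x"])
          show "x / y \<le> x" using y elim by (simp add: divide_le_eq)
          fix t assume t: "x / y \<le> t" "t \<le> x"
          have t0: "t > 0" using t y elim by (smt (verit) divide_pos_pos)
          show "\<exists>d. (F x has_real_derivative d) (at t) \<and> d \<le> 0"
            using Pmono[OF t0 t(2)] t0 by (intro exI[of _ "(P t - P x) / (t * t)"] conjI dF elim) (auto simp: divide_nonpos_pos)
        qed
        then have "h x + \<phi> x \<le> h (x / y) + y * \<phi> x"
          using elim y by (simp add: F_def P\<phi> field_simps)
        then have "h x - h (x / y) \<le> \<phi> x * (y - 1)" by (simp add: algebra_simps)
        then show ?case using y by (simp add: divide_le_eq)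
      qed
      show "\<forall>\<^sub>F x in at_top. \<phi> x \<le> (h (y * x) - h x) * (y / (y - 1))"
        using eventually_gt_at_top[of 0]
      proof eventually_elim
        case (elim x)
        have "F x x \<le> F x (y * x)"
        proof (rule DERIV_nonneg_imp_nondecreasing[of x "y * x" "F x"])
          show "x \<le> y * x" using y elim by simp
          fix t assume t: "x \<le> t" "t \<le> y * x"
          have t0: "t > 0" using t elim by simp
          show "\<exists>d. (F x has_real_derivative d) (at t) \<and> d \<ge> 0"
            using Pmono[OF elim t(1)] t0 by (intro exI[of _ "(P t - P x) / (t * t)"] conjI dF elim) auto
        qed
        then have "h x + \<phi> x \<le> h (y * x) + \<phi> x / y"
          using elim y by (simp add: F_def P\<phi>)
        then have "\<phi> x * ((y - 1) / y) \<le> h (y * x) - h x" using y by (simp add: field_simps)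
        then have "\<phi> x * ((y - 1) / y) * (y / (y - 1)) \<le> (h (y * x) - h x) * (y / (y - 1))"
          using y by (intro mult_right_mono) auto
        then show ?case using y by simp
      qed
      show "((\<lambda>x. (h x - h (x / y)) / (y - 1)) \<longlongrightarrow> \<kappa> * ln y / (y - 1)) at_top"
        using y by (intro tendsto_divide shift_back hl) auto
      show "((\<lambda>x. (h (y * x) - h x) * (y / (y - 1))) \<longlongrightarrow> \<kappa> * ln y * (y / (y - 1))) at_top"
        using y by (intro tendsto_mult hl) auto
      show "\<kappa> / y \<le> \<kappa> * ln y / (y - 1)" "\<kappa> * ln y * (y / (y - 1)) \<le> \<kappa> * y"
        using lo_up_bounds[OF y k] by auto
    qed
  qed

  have 51: "C1" if "C5"
  proof -
    have gl: "((\<lambda>x. g1 (y * x) - g1 x) \<longlongrightarrow> \<kappa> * ln y) at_top" if "y > 1" for y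
      using \<open>C5\<close> that unfolding C5_def by auto
    show ?thesis unfolding C1_def
    proof (rule taub_generic[OF k, where Lo = "\<lambda>y x. (g1 (y * x) - g1 x) / (y - 1)"
          and Up = "\<lambda>y x. (g1 x - g1 (x / y)) * (y / (y - 1))"
          and lo = "\<lambda>y. \<kappa> * ln y / (y - 1)" and up = "\<lambda>y. \<kappa> * ln y * (y / (y - 1))"])
      fix y :: real assume y: "y > 1"
      define G where "G x t = g1 t - g2 x * t" for x t
      have dG: "(G x has_real_derivative g2 t - g2 x) (at t)" if "t > 0" for t x
      proof -
        have "(G x has_real_derivative g2 t - g2 x * 1) (at t)"
          unfolding G_def[abs_def] using that by (intro derivative_eq_intros d2) (auto intro: d2)
        then show ?thesis by simp
      qed
      show "\<forall>\<^sub>F x in at_top. (g1 (y * x) - g1 x) / (y - 1) \<le> x * g2 x"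
        using eventually_gt_at_top[of 0]
      proof eventually_elim
        case (elim x)
        have "G x x \<ge> G x (y * x)"
        proof (rule DERIV_nonpos_imp_nonincreasing[of x "y * x" "G x"])
          show "x \<le> y * x" using y elim by simp
          fix t assume t: "x \<le> t" "t \<le> y * x"
          have t0: "t > 0" using t elim by simp
          show "\<exists>d. (G x has_real_derivative d) (at t) \<and> d \<le> 0"
            using mono[OF elim t(1)] t0 by (intro exI[of _ "g2 t - g2 x"] conjI dG) auto
        qed
        then have "g1 (y * x) - g1 x \<le> x * g2 x * (y - 1)" by (simp add: G_def algebra_simps)
        then show ?case using y by (simp add: divide_le_eq)
      qed
      show "\<forall>\<^sub>F x in at_top. x * g2 x \<le> (g1 x - g1 (x / y)) * (y / (y - 1))"
        using eventually_gt_at_top[of 0]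
      proof eventually_elim
        case (elim x)
        have "G x (x / y) \<le> G x x"
        proof (rule DERIV_nonneg_imp_nondecreasing[of "x / y" x "G x"])
          show "x / y \<le> x" using y elim by (simp add: divide_le_eq)
          fix t assume t: "x / y \<le> t" "t \<le> x"
          have t0: "t > 0" using t y elim by (smt (verit) divide_pos_pos)
          show "\<exists>d. (G x has_real_derivative d) (at t) \<and> d \<ge> 0"
            using mono[OF t0 t(2)] t0 by (intro exI[of _ "g2 t - g2 x"] conjI dG) auto
        qed
        then have "x * g2 x * ((y - 1) / y) \<le> g1 x - g1 (x / y)" using y
          by (simp add: G_def field_simps)
        then have "x * g2 x * ((y - 1) / y) * (y / (y - 1)) \<le> (g1 x - g1 (x / y)) * (y / (y - 1))"
          using y by (intro mult_right_mono) auto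
        then show ?case using y by simp
      qed
      show "((\<lambda>x. (g1 (y * x) - g1 x) / (y - 1)) \<longlongrightarrow> \<kappa> * ln y / (y - 1)) at_top"
        using y by (intro tendsto_divide gl) auto
      show "((\<lambda>x. (g1 x - g1 (x / y)) * (y / (y - 1))) \<longlongrightarrow> \<kappa> * ln y * (y / (y - 1))) at_top"
        using y by (intro tendsto_mult shift_back gl) auto
      show "\<kappa> / y \<le> \<kappa> * ln y / (y - 1)" "\<kappa> * ln y * (y / (y - 1)) \<le> \<kappa> * y"
        using lo_up_bounds[OF y k] by auto
    qed
  qed

  have 34: "C4" if "C3"
  proof -
    obtain L where L: "slowly_varying L" "\<And>x. x > 0 \<Longrightarrow> h x = \<kappa> * ln x + ln (L x)"
      using \<open>C3\<close> unfolding C3_def by blast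
    have Lpos: "\<And>x. x > 0 \<Longrightarrow> L x > 0" and Llim: "\<And>y. y > 0 \<Longrightarrow> ((\<lambda>x. L (y * x) / L x) \<longlongrightarrow> 1) at_top"
      using L(1) unfolding slowly_varying_def by auto
    { fix y :: real assume y: "y > 0"
      have "((\<lambda>x. \<kappa> * ln y + ln (L (y * x) / L x)) \<longlongrightarrow> \<kappa> * ln y + ln 1) at_top"
        by (intro tendsto_add tendsto_ln Llim y) auto
      moreover have "\<forall>\<^sub>F x in at_top. \<kappa> * ln y + ln (L (y * x) / L x) = h (y * x) - h x"
        using eventually_gt_at_top[of 0]
      proof eventually_elim
        case (elim x)
        have "y * x > 0" using y elim by simp
        then show ?case using L(2)[OF elim] L(2)[of "y * x"] Lpos[OF elim] Lpos[of "y * x"] y elim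
          by (simp add: ln_div ln_mult algebra_simps)
      qed
      ultimately have "((\<lambda>x. h (y * x) - h x) \<longlongrightarrow> \<kappa> * ln y) at_top" using tendsto_cong by fastforce
    }
    then show ?thesis unfolding C4_def by blast
  qed

  have 43: "C3" if "C4"
  proof -
    define L where "L x = exp (h x - \<kappa> * ln x)" for x
    have "slowly_varying L" unfolding slowly_varying_def
    proof (intro conjI allI impI)
      show "0 < L x" for x by (simp add: L_def)
      fix y :: real assume y: "y > 0"
      have "((\<lambda>x. exp ((h (y * x) - h x) - \<kappa> * ln y)) \<longlongrightarrow> exp (\<kappa> * ln y - \<kappa> * ln y)) at_top"
        using \<open>C4\<close> y unfolding C4_def by (intro tendsto_exp tendsto_diff) auto
      moreover have "\<forall>\<^sub>F x in at_top. exp ((h (y * x) - h x) - \<kappa> * ln y) = L (y * x) / L x"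
        using eventually_gt_at_top[of 0]
      proof eventually_elim
        case (elim x)
        have "L (y * x) / L x = exp ((h (y * x) - \<kappa> * ln (y * x)) - (h x - \<kappa> * ln x))"
          by (simp add: L_def exp_diff)
        also have "\<dots> = exp ((h (y * x) - h x) - \<kappa> * ln y)"
          using y elim by (simp add: ln_mult algebra_simps)
        finally show ?case by simp
      qed
      ultimately show "((\<lambda>x. L (y * x) / L x) \<longlongrightarrow> 1) at_top" using tendsto_cong by fastforce
    qed
    moreover have "\<forall>x>0. h x = \<kappa> * ln x + ln (L x)" by (simp add: L_def)
    ultimately show ?thesis unfolding C3_def by blast
  qed

  have "(C1 \<longleftrightarrow> C2) \<and> (C2 \<longleftrightarrow> C3) \<and> (C3 \<longleftrightarrow> C4) \<and> (C4 \<longleftrightarrow> C5)"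
    using 12 24 245 42 51 34 43 by blast
  then show ?thesis unfolding C1_def C2_def C3_def C4_def C5_def h_def \<phi>_def by simp
qed



definition psi :: "real \<Rightarrow> real \<Rightarrow> real" where "psi v x = pow0 (1 - v) x - 1 + x * v"
definition psi1 :: "real \<Rightarrow> real \<Rightarrow> real" where "psi1 v x = (1 - v) powr x * ln (1 - v) + v"
definition psi2 :: "real \<Rightarrow> real \<Rightarrow> real" where "psi2 v x = (1 - v) powr x * (ln (1 - v))\<^sup>2"

lemma powr_base_deriv:
  fixes b x :: real assumes "0 \<le> b"
  shows "((\<lambda>x. b powr x) has_real_derivative b powr x * ln b) (at x)"
proof (cases "b = 0")
  case True then show ?thesis by simp
next
  case False
  then have "(\<lambda>x. b powr x) = (\<lambda>x. exp (x * ln b))" by (auto simp: powr_def fun_eq_iff)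
  moreover have "((\<lambda>x. exp (x * ln b)) has_real_derivative exp (x * ln b) * (1 * ln b)) (at x)"
    by (intro derivative_eq_intros) auto
  ultimately show ?thesis using False by (simp add: powr_def)
qed

lemma psi_deriv:
  assumes "0 \<le> v" "v \<le> 1" "x > 0"
  shows "(psi v has_real_derivative psi1 v x) (at x)"
proof (rule has_field_derivative_transform_within_open[where S = "{0<..}"])
  show "((\<lambda>x. (1 - v) powr x - 1 + x * v) has_real_derivative psi1 v x) (at x)"
    unfolding psi1_def using assms by (intro derivative_eq_intros powr_base_deriv) auto
qed (use assms in \<open>auto simp: psi_def pow0_def\<close>)

lemma psi1_deriv:
  assumes "0 \<le> v" "v \<le> 1"
  shows "(psi1 v has_real_derivative psi2 v x) (at x)"
proof -
  have "((\<lambda>x. (1 - v) powr x * ln (1 - v) + v) has_real_derivative (1 - v) powr x * ln (1 - v) * ln (1 - v) + 0) (at x)"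
    using assms by (intro derivative_eq_intros powr_base_deriv) auto
  then show ?thesis by (simp add: psi1_def[abs_def] psi2_def power2_eq_square mult.assoc)
qed

lemma psi_one: assumes "0 \<le> v" "v \<le> 1" shows "psi v 1 = 0"
  using assms by (auto simp: psi_def pow0_def)

lemma T1:
  fixes t y :: real assumes "0 < t" "t \<le> 1" "y > 0"
  shows "t powr y * \<bar>ln t\<bar> \<le> 1 / y"
proof -
  define s where "s = - y * ln t"
  have s0: "s \<ge> 0" using assms by (simp add: s_def mult_nonneg_nonpos)
  have "t powr y = exp (- s)" using assms by (simp add: powr_def s_def)
  moreover have "\<bar>ln t\<bar> = s / y" using assms by (simp add: s_def)
  moreover have "exp (- s) * s \<le> 1"
  proof -
    have "s \<le> exp s" using exp_ge_add_one_self[of s] by linarith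
    then show ?thesis by (simp add: exp_minus field_simps)
  qed
  ultimately show ?thesis using assms by (simp add: divide_right_mono)
qed

lemma T2:
  fixes t y :: real assumes "0 < t" "t \<le> 1" "y > 0"
  shows "t powr y * (ln t)\<^sup>2 \<le> 4 / y\<^sup>2"
proof -
  have a: "t powr (y/2) * \<bar>ln t\<bar> \<le> 1 / (y/2)" using T1[of t "y/2"] assms by simp
  have b: "0 \<le> t powr (y/2) * \<bar>ln t\<bar>" by simp
  have e: "(t powr (y/2))\<^sup>2 = t powr y" by (simp add: power2_eq_square powr_add[symmetric])
  have "t powr y * (ln t)\<^sup>2 = (t powr (y/2) * \<bar>ln t\<bar>)\<^sup>2"
    by (simp only: power_mult_distrib e power2_abs)
  also have "\<dots> \<le> (1 / (y/2))\<^sup>2" using a b by (rule power_mono)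
  also have "\<dots> = 4 / y\<^sup>2" by (simp add: power2_eq_square)
  finally show ?thesis .
qed

lemma ln_small:
  fixes v :: real assumes "0 \<le> v" "v \<le> 1/2"
  shows "- 2 * v \<le> ln (1 - v)" "ln (1 - v) \<le> - v" "- 2 * v\<^sup>2 \<le> v + ln (1 - v)"
proof -
  show "ln (1 - v) \<le> - v" using assms ln_le_minus_one[of "1 - v"] by simp
  have "ln (1 / (1 - v)) \<le> 1 / (1 - v) - 1" using assms by (intro ln_le_minus_one) auto
  then have "- ln (1 - v) \<le> v / (1 - v)" using assms by (simp add: ln_div field_simps)
  moreover have "v / (1 - v) \<le> 2 * v" using assms mult_left_mono[of "v * 2" 1 v] by (simp add: field_simps)
  moreover have "v / (1 - v) \<le> v + 2 * v\<^sup>2"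
  proof -
    have "0 \<le> v\<^sup>2 * (1 - 2 * v)" using assms by simp
    then have "v \<le> (v + 2 * v\<^sup>2) * (1 - v)" by (simp add: algebra_simps power2_eq_square power3_eq_cube)
    then show ?thesis using assms by (simp add: divide_le_eq)
  qed
  ultimately show "- 2 * v \<le> ln (1 - v)" "- 2 * v\<^sup>2 \<le> v + ln (1 - v)" by linarith+
qed


lemma T1':
  fixes t y :: real assumes "0 \<le> t" "t \<le> 1" "y > 0"
  shows "t powr y * \<bar>ln t\<bar> \<le> 1 / y"
  using T1[of t y] assms by (cases "t = 0") auto

lemma T2':
  fixes t y :: real assumes "0 \<le> t" "t \<le> 1" "y > 0"
  shows "t powr y * (ln t)\<^sup>2 \<le> 4 / y\<^sup>2"
  using T2[of t y] assms by (cases "t = 0") auto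

lemma psi12_bound:
  fixes v y x0 x1 :: real
  assumes x0: "0 < x0" "x0 \<le> y" "y \<le> x1" and v: "0 \<le> v" "v \<le> 1"
  shows "\<bar>psi1 v y\<bar> \<le> (6 + 4 * x1 + 4 / x0) * v\<^sup>2" "\<bar>psi2 v y\<bar> \<le> (4 + 16 / x0\<^sup>2) * v\<^sup>2"
proof -
  define t where "t = 1 - v"
  define tp where "tp = t powr y"
  have y0: "y > 0" using x0 by simp
  have t01: "0 \<le> t" "t \<le> 1" using v by (auto simp: t_def)
  have tp01: "0 \<le> tp" "tp \<le> 1" using t01 y0 unfolding tp_def by (auto intro: powr_le_one_le powr_le1)
  have p1: "psi1 v y = tp * ln t + v" by (simp add: psi1_def tp_def t_def)
  have p2: "psi2 v y = tp * (ln t)\<^sup>2" by (simp add: psi2_def tp_def t_def)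
  have K1: "0 \<le> 6 + 4 * x1 + 4 / x0" using x0 by simp
  have K2: "0 \<le> 4 + 16 / x0\<^sup>2" using x0 by simp
  have v2: "0 \<le> v\<^sup>2" by simp
  have "\<bar>psi1 v y\<bar> \<le> (6 + 4 * x1 + 4 / x0) * v\<^sup>2 \<and> \<bar>psi2 v y\<bar> \<le> (4 + 16 / x0\<^sup>2) * v\<^sup>2"
  proof (cases "v \<le> 1/2")
    case True
    note ls = ln_small[OF v(1) True, folded t_def]
    have tpos: "t > 0" using True by (simp add: t_def)
    have "tp = exp (y * ln t)" using tpos by (simp add: tp_def powr_def)
    then have tpl: "1 + y * ln t \<le> tp" using exp_ge_add_one_self[of "y * ln t"] by simp
    have "\<bar>ln t\<bar> \<le> 2 * v" using ls by simp
    have "y * (- ln t) \<le> y * (2 * v)" using ls y0 by (intro mult_left_mono) auto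
    then have yl: "- (y * ln t) \<le> y * (2 * v)" by simp
    have "\<bar>tp - 1\<bar> \<le> y * (2 * v)" using tpl tp01 yl by simp
    then have "\<bar>tp - 1\<bar> * \<bar>ln t\<bar> \<le> (y * (2 * v)) * (2 * v)"
      using \<open>\<bar>ln t\<bar> \<le> 2 * v\<close> by (intro mult_mono) (use y0 v in auto)
    also have "\<dots> = 4 * y * v\<^sup>2" by (simp add: power2_eq_square)
    also have "\<dots> \<le> 4 * x1 * v\<^sup>2" using x0 by (intro mult_right_mono) auto
    finally have A: "\<bar>(tp - 1) * ln t\<bar> \<le> 4 * x1 * v\<^sup>2" by (simp add: abs_mult)
    have B: "\<bar>v + ln t\<bar> \<le> 2 * v\<^sup>2" using ls by (simp add: abs_le_iff)
    have "psi1 v y = (v + ln t) + (tp - 1) * ln t" using p1 by (simp add: algebra_simps)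
    then have "\<bar>psi1 v y\<bar> \<le> 2 * v\<^sup>2 + 4 * x1 * v\<^sup>2" using A B by linarith
    also have "\<dots> \<le> (6 + 4 * x1 + 4 / x0) * v\<^sup>2" using x0 v2 by (simp add: algebra_simps)
    finally have r1: "\<bar>psi1 v y\<bar> \<le> (6 + 4 * x1 + 4 / x0) * v\<^sup>2" .
    have "(ln t)\<^sup>2 \<le> (2 * v)\<^sup>2" using \<open>\<bar>ln t\<bar> \<le> 2 * v\<close> by (metis abs_ge_zero power2_abs power_mono)
    then have "tp * (ln t)\<^sup>2 \<le> 1 * (2 * v)\<^sup>2" using tp01 by (intro mult_mono) auto
    then have "\<bar>psi2 v y\<bar> \<le> 4 * v\<^sup>2" using p2 tp01 by (simp add: power2_eq_square)
    also have "\<dots> \<le> (4 + 16 / x0\<^sup>2) * v\<^sup>2" using x0 v2 by (simp add: algebra_simps)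
    finally show ?thesis using r1 by simp
  next
    case False
    have v4: "1 \<le> 4 * v\<^sup>2"
    proof -
      have "(1/2)\<^sup>2 \<le> v\<^sup>2" using False by (intro power_mono) auto
      then show ?thesis by (simp add: power2_eq_square)
    qed
    have a: "tp * \<bar>ln t\<bar> \<le> 1 / x0"
    proof -
      have "tp * \<bar>ln t\<bar> \<le> 1 / y" unfolding tp_def using T1'[OF t01 y0] .
      also have "\<dots> \<le> 1 / x0" using x0 by (intro divide_left_mono) auto
      finally show ?thesis .
    qed
    have e1: "\<bar>tp * ln t\<bar> = tp * \<bar>ln t\<bar>" using tp01 by (simp add: abs_mult)
    have "\<bar>psi1 v y\<bar> \<le> \<bar>tp * ln t\<bar> + \<bar>v\<bar>" unfolding p1 by (rule abs_triangle_ineq)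
    then have "\<bar>psi1 v y\<bar> \<le> 1 + 1 / x0" using a e1 v by linarith
    also have "\<dots> \<le> (1 + 1 / x0) * (4 * v\<^sup>2)" using v4 x0 mult_left_mono[of 1 "4 * v\<^sup>2" "1 + 1 / x0"] by simp
    also have "\<dots> \<le> (6 + 4 * x1 + 4 / x0) * v\<^sup>2" using x0 v2 by (simp add: algebra_simps)
    finally have r1: "\<bar>psi1 v y\<bar> \<le> (6 + 4 * x1 + 4 / x0) * v\<^sup>2" .
    have "tp * (ln t)\<^sup>2 \<le> 4 / y\<^sup>2" unfolding tp_def using T2'[OF t01 y0] .
    also have "\<dots> \<le> 4 / x0\<^sup>2" using x0 by (intro divide_left_mono power_mono) auto
    also have "\<dots> \<le> (4 / x0\<^sup>2) * (4 * v\<^sup>2)" using v4 x0 mult_left_mono[of 1 "4 * v\<^sup>2" "4 / x0\<^sup>2"] by simp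
    also have "\<dots> \<le> (4 + 16 / x0\<^sup>2) * v\<^sup>2" using x0 v2 by (simp add: algebra_simps)
    finally show ?thesis using r1 p2 tp01 by (simp add: abs_mult)
  qed
  then show "\<bar>psi1 v y\<bar> \<le> (6 + 4 * x1 + 4 / x0) * v\<^sup>2" "\<bar>psi2 v y\<bar> \<le> (4 + 16 / x0\<^sup>2) * v\<^sup>2" by auto
qed



lemma deriv_bound_diff:
  fixes f f' :: "real \<Rightarrow> real"
  assumes "a \<le> b" "\<And>s. a \<le> s \<Longrightarrow> s \<le> b \<Longrightarrow> (f has_real_derivative f' s) (at s)"
    "\<And>s. a \<le> s \<Longrightarrow> s \<le> b \<Longrightarrow> \<bar>f' s\<bar> \<le> K"
  shows "\<bar>f b - f a\<bar> \<le> K * (b - a)"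
proof (cases "a = b")
  case True then show ?thesis by simp
next
  case False
  then have ab: "a < b" using assms(1) by simp
  obtain z where z: "a < z" "z < b" "f b - f a = (b - a) * f' z"
    using MVT2[OF ab, of f f'] assms(2) by auto
  have "\<bar>f b - f a\<bar> = (b - a) * \<bar>f' z\<bar>" using z ab by (simp add: abs_mult)
  also have "\<dots> \<le> (b - a) * K" using assms(3)[of z] z ab by (intro mult_left_mono) auto
  finally show ?thesis by (simp add: mult.commute)
qed

lemma psi_bounds:
  fixes x0 x1 :: real assumes "0 < x0"
  shows "\<exists>K\<ge>0. \<forall>v y. 0 \<le> v \<longrightarrow> v \<le> 1 \<longrightarrow> x0 \<le> y \<longrightarrow> y \<le> x1 \<longrightarrow>
     \<bar>psi v y\<bar> \<le> K * v\<^sup>2 \<and> \<bar>psi1 v y\<bar> \<le> K * v\<^sup>2 \<and> \<bar>psi2 v y\<bar> \<le> K * v\<^sup>2"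
proof -
  define a where "a = min x0 1"
  define b where "b = max x1 1"
  have a0: "0 < a" using assms by (simp add: a_def)
  define K1 where "K1 = 6 + 4 * b + 4 / a"
  define K2 where "K2 = 4 + 16 / a\<^sup>2"
  define K where "K = K1 * (b + 1) + K1 + K2"
  have K1: "0 \<le> K1" using a0 by (simp add: K1_def b_def)
  have K2: "0 \<le> K2" using a0 by (simp add: K2_def)
  have b1: "1 \<le> b" by (simp add: b_def)
  have K0: "0 \<le> K" using K1 K2 b1 by (simp add: K_def)
  have bnd: "\<bar>psi1 v y\<bar> \<le> K1 * v\<^sup>2" "\<bar>psi2 v y\<bar> \<le> K2 * v\<^sup>2"
    if "0 \<le> v" "v \<le> 1" "a \<le> y" "y \<le> b" for v y
    using psi12_bound[OF a0 that(3,4) that(1,2)] by (auto simp: K1_def K2_def)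
  show ?thesis
  proof (intro exI[of _ K] conjI allI impI K0)
    fix v y :: real assume v: "0 \<le> v" "v \<le> 1" and y: "x0 \<le> y" "y \<le> x1"
    have ya: "a \<le> y" "y \<le> b" using y by (auto simp: a_def b_def)
    have v2: "0 \<le> v\<^sup>2" by simp
    have "\<bar>psi v (max y 1) - psi v (min y 1)\<bar> \<le> (K1 * v\<^sup>2) * (max y 1 - min y 1)"
    proof (rule deriv_bound_diff)
      fix s assume s: "min y 1 \<le> s" "s \<le> max y 1"
      have sa: "a \<le> s" "s \<le> b" using s ya by (auto simp: a_def b_def)
      show "(psi v has_real_derivative psi1 v s) (at s)" using psi_deriv[OF v] sa a0 by simp
      show "\<bar>psi1 v s\<bar> \<le> K1 * v\<^sup>2" using bnd(1)[OF v sa] .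
    qed simp
    moreover have "\<bar>psi v y\<bar> = \<bar>psi v (max y 1) - psi v (min y 1)\<bar>"
      using psi_one[OF v] by (cases "y \<le> 1") (auto simp: max_def min_def)
    moreover have "max y 1 - min y 1 \<le> b + 1" using ya a0 by (auto simp: max_def min_def)
    moreover have "(K1 * v\<^sup>2) * (b + 1) \<le> K * v\<^sup>2" using K1 K2 v2 by (simp add: K_def algebra_simps)
    ultimately have "\<bar>psi v y\<bar> \<le> (K1 * v\<^sup>2) * (b + 1)"
      using K1 v2 by (smt (verit) mult_left_mono mult_nonneg_nonneg)
    then show "\<bar>psi v y\<bar> \<le> K * v\<^sup>2" using \<open>(K1 * v\<^sup>2) * (b + 1) \<le> K * v\<^sup>2\<close> by linarith
    have "K1 * v\<^sup>2 \<le> K * v\<^sup>2" "K2 * v\<^sup>2 \<le> K * v\<^sup>2" using K1 K2 b1 v2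
      by (auto simp: K_def intro!: mult_right_mono)
    then show "\<bar>psi1 v y\<bar> \<le> K * v\<^sup>2" "\<bar>psi2 v y\<bar> \<le> K * v\<^sup>2"
      using bnd[OF v ya] by linarith+
  qed
qed

lemma Delta_props:
  assumes "u \<in> Delta"
  shows "\<And>i. 0 \<le> u i" "\<And>i. u i \<le> 1" "summable (\<lambda>i. (u i)\<^sup>2)"
proof -
  have u: "\<And>i. 0 \<le> u i" "summable u" "suminf u \<le> 1" using assms by (auto simp: Delta_def)
  show "\<And>i. 0 \<le> u i" by (rule u)
  show le1: "u i \<le> 1" for i
  proof -
    have "sum u {i} \<le> suminf u" using u by (intro sum_le_suminf) auto
    then show ?thesis using u by simp
  qed
  show "summable (\<lambda>i. (u i)\<^sup>2)"
    using u le1 by (intro summable_comparison_test[OF _ u(2)]) (auto intro!: exI[of _ 0] simp: power2_eq_square mult_le_cancel_left1 mult_left_le)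
qed



definition S0 :: "(nat \<Rightarrow> real) \<Rightarrow> real \<Rightarrow> real" where "S0 u x = (\<Sum>i. psi (u i) x)"
definition S1 :: "(nat \<Rightarrow> real) \<Rightarrow> real \<Rightarrow> real" where "S1 u x = (\<Sum>i. psi1 (u i) x)"
definition S2 :: "(nat \<Rightarrow> real) \<Rightarrow> real \<Rightarrow> real" where "S2 u x = (\<Sum>i. psi2 (u i) x)"

lemma sum_bound:
  fixes f w :: "nat \<Rightarrow> real"
  assumes "summable w" "\<And>i. \<bar>f i\<bar> \<le> K * w i"
  shows "summable f" "\<bar>suminf f\<bar> \<le> K * suminf w"
proof -
  have sK: "summable (\<lambda>i. K * w i)" using assms(1) by (rule summable_mult)
  have sa: "summable (\<lambda>i. \<bar>f i\<bar>)"
    by (rule summable_comparison_test[OF _ sK]) (use assms(2) in auto)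
  then show "summable f" by (rule summable_rabs_cancel)
  have "\<bar>suminf f\<bar> \<le> (\<Sum>i. \<bar>f i\<bar>)" using sa by (rule summable_rabs)
  also have "\<dots> \<le> (\<Sum>i. K * w i)" using sa sK assms(2) by (intro suminf_le) auto
  also have "\<dots> = K * suminf w" using assms(1) by (rule suminf_mult)
  finally show "\<bar>suminf f\<bar> \<le> K * suminf w" .
qed

lemma series_bound:
  fixes x0 x1 :: real assumes "0 < x0"
  shows "\<exists>K\<ge>0. \<forall>u\<in>Delta. \<forall>y. x0 \<le> y \<longrightarrow> y \<le> x1 \<longrightarrow>
     summable (\<lambda>i. psi (u i) y) \<and> summable (\<lambda>i. psi1 (u i) y) \<and> summable (\<lambda>i. psi2 (u i) y) \<and>
     \<bar>S0 u y\<bar> \<le> K * sqnorm u \<and> \<bar>S1 u y\<bar> \<le> K * sqnorm u \<and> \<bar>S2 u y\<bar> \<le> K * sqnorm u"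
proof -
  obtain K where K: "K \<ge> 0" "\<And>v y. 0 \<le> v \<Longrightarrow> v \<le> 1 \<Longrightarrow> x0 \<le> y \<Longrightarrow> y \<le> x1 \<Longrightarrow>
     \<bar>psi v y\<bar> \<le> K * v\<^sup>2 \<and> \<bar>psi1 v y\<bar> \<le> K * v\<^sup>2 \<and> \<bar>psi2 v y\<bar> \<le> K * v\<^sup>2"
    using psi_bounds[OF assms, of x1] by blast
  show ?thesis
  proof (intro exI[of _ K] conjI K(1) ballI allI impI)
    fix u y assume u: "u \<in> Delta" and y: "x0 \<le> y" "y \<le> x1"
    note D = Delta_props[OF u]
    have b: "\<bar>psi (u i) y\<bar> \<le> K * (u i)\<^sup>2" "\<bar>psi1 (u i) y\<bar> \<le> K * (u i)\<^sup>2" "\<bar>psi2 (u i) y\<bar> \<le> K * (u i)\<^sup>2" for i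
      using K(2)[OF D(1)[of i] D(2)[of i] y] by auto
    show "summable (\<lambda>i. psi (u i) y)" "summable (\<lambda>i. psi1 (u i) y)" "summable (\<lambda>i. psi2 (u i) y)"
      using sum_bound(1)[OF D(3) b(1)] sum_bound(1)[OF D(3) b(2)] sum_bound(1)[OF D(3) b(3)] by auto
    show "\<bar>S0 u y\<bar> \<le> K * sqnorm u" "\<bar>S1 u y\<bar> \<le> K * sqnorm u" "\<bar>S2 u y\<bar> \<le> K * sqnorm u"
      unfolding S0_def S1_def S2_def sqnorm_def
      using sum_bound(2)[OF D(3) b(1)] sum_bound(2)[OF D(3) b(2)] sum_bound(2)[OF D(3) b(3)] by auto
  qed
qed

lemma series_deriv:
  assumes u: "u \<in> Delta" and x: "x > 0"
  shows "(S0 u has_real_derivative S1 u x) (at x)" "(S1 u has_real_derivative S2 u x) (at x)"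
proof -
  define A where "A = {x/2..2*x}"
  have xA: "x \<in> interior A" "x \<in> A" using x by (auto simp: A_def)
  have A0: "y > 0" if "y \<in> A" for y using that x by (auto simp: A_def)
  have x2: "0 < x/2" using x by simp
  from series_bound[OF x2, of "2*x"] obtain K where K1: "K \<ge> 0" and K2: "\<forall>u\<in>Delta. \<forall>y. x/2 \<le> y \<longrightarrow> y \<le> 2*x \<longrightarrow>
     summable (\<lambda>i. psi (u i) y) \<and> summable (\<lambda>i. psi1 (u i) y) \<and> summable (\<lambda>i. psi2 (u i) y) \<and>
     \<bar>S0 u y\<bar> \<le> K * sqnorm u \<and> \<bar>S1 u y\<bar> \<le> K * sqnorm u \<and> \<bar>S2 u y\<bar> \<le> K * sqnorm u"
    by (elim exE conjE)
  from psi_bounds[OF x2, of "2*x"] obtain K' where K'1: "K' \<ge> 0" and K'2: "\<forall>v y. 0 \<le> v \<longrightarrow> v \<le> 1 \<longrightarrow> x/2 \<le> y \<longrightarrow> y \<le> 2*x \<longrightarrow>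
     \<bar>psi v y\<bar> \<le> K' * v\<^sup>2 \<and> \<bar>psi1 v y\<bar> \<le> K' * v\<^sup>2 \<and> \<bar>psi2 v y\<bar> \<le> K' * v\<^sup>2"
    by (elim exE conjE)
  note D = Delta_props[OF u]
  have sK: "summable (\<lambda>i. K' * (u i)\<^sup>2)" using D(3) by (rule summable_mult)
  have sm: "summable (\<lambda>i. psi (u i) x)" "summable (\<lambda>i. psi1 (u i) x)"
    using K2 u x by auto
  have "((\<lambda>y. \<Sum>n. psi (u n) y) has_field_derivative (\<Sum>n. psi1 (u n) x)) (at x)"
  proof (rule has_field_derivative_series'(2)[where S = A and x0 = x])
    show "convex A" by (simp add: A_def)
    show "(psi (u n) has_field_derivative psi1 (u n) y) (at y within A)" if "y \<in> A" for n y
      using psi_deriv[OF D(1) D(2) A0[OF that]] by (rule has_field_derivative_at_within)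
    show "uniformly_convergent_on A (\<lambda>n y. \<Sum>i<n. psi1 (u i) y)"
      by (rule Weierstrass_m_test'[OF _ sK]) (use K'2 D in \<open>auto simp: A_def\<close>)
  qed (use xA sm in auto)
  then show "(S0 u has_real_derivative S1 u x) (at x)" by (simp add: S0_def[abs_def] S1_def)
  have "((\<lambda>y. \<Sum>n. psi1 (u n) y) has_field_derivative (\<Sum>n. psi2 (u n) x)) (at x)"
  proof (rule has_field_derivative_series'(2)[where S = A and x0 = x])
    show "convex A" by (simp add: A_def)
    show "(psi1 (u n) has_field_derivative psi2 (u n) y) (at y within A)" if "y \<in> A" for n y
      using psi1_deriv[OF D(1) D(2)] by (rule has_field_derivative_at_within)
    show "uniformly_convergent_on A (\<lambda>n y. \<Sum>i<n. psi2 (u i) y)"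
      by (rule Weierstrass_m_test'[OF _ sK]) (use K'2 D in \<open>auto simp: A_def\<close>)
  qed (use xA sm in auto)
  then show "(S1 u has_real_derivative S2 u x) (at x)" by (simp add: S1_def[abs_def] S2_def)
qed



lemma deriv_integral:
  fixes F F' :: "'a \<Rightarrow> real \<Rightarrow> real" and M :: "'a measure"
  assumes fin: "finite_measure M"
  and der: "\<And>u t. u \<in> space M \<Longrightarrow> a < t \<Longrightarrow> t < b \<Longrightarrow> (F u has_real_derivative F' u t) (at t)"
  and mF: "\<And>t. a < t \<Longrightarrow> t < b \<Longrightarrow> (\<lambda>u. F u t) \<in> borel_measurable M"
  and mF': "\<And>t. a < t \<Longrightarrow> t < b \<Longrightarrow> (\<lambda>u. F' u t) \<in> borel_measurable M"
  and bnd: "\<And>u t. u \<in> space M \<Longrightarrow> a < t \<Longrightarrow> t < b \<Longrightarrow> \<bar>F' u t\<bar> \<le> K"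
  and intF: "\<And>t. a < t \<Longrightarrow> t < b \<Longrightarrow> integrable M (\<lambda>u. F u t)"
  and t: "a < t" "t < b"
  shows "((\<lambda>s. \<integral>u. F u s \<partial>M) has_real_derivative (\<integral>u. F' u t \<partial>M)) (at t)"
proof -
  define G where "G s = (\<integral>u. F u s \<partial>M)" for s
  define q where "q u s = (F u s - F u t) / (s - t)" for u s
  have "((\<lambda>s. (G s - G t) / (s - t)) \<longlongrightarrow> (\<integral>u. F' u t \<partial>M)) (at t within {a<..<b})"
    unfolding tendsto_at_iff_sequentially
  proof (intro allI impI)
    fix X :: "nat \<Rightarrow> real" assume X: "\<forall>i. X i \<in> {a<..<b} - {t}" "X \<longlonglongrightarrow> t"
    have eq: "(G (X i) - G t) / (X i - t) = (\<integral>u. q u (X i) \<partial>M)" for i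
    proof -
      have "(\<integral>u. q u (X i) \<partial>M) = (\<integral>u. F u (X i) - F u t \<partial>M) / (X i - t)"
        unfolding q_def by (rule integral_divide_zero)
      also have "\<dots> = (G (X i) - G t) / (X i - t)"
        unfolding G_def using X(1) t by (subst Bochner_Integration.integral_diff) (auto intro!: intF)
      finally show ?thesis by simp
    qed
    have "(\<lambda>i. \<integral>u. q u (X i) \<partial>M) \<longlonglongrightarrow> (\<integral>u. F' u t \<partial>M)"
    proof (rule integral_dominated_convergence[where w = "\<lambda>_. K"])
      show "(\<lambda>u. F' u t) \<in> borel_measurable M" using mF' t by auto
      show "(\<lambda>u. q u (X i)) \<in> borel_measurable M" for i
        unfolding q_def using X(1) t by (intro borel_measurable_divide borel_measurable_diff mF) auto
      show "integrable M (\<lambda>_. K)" using fin by (rule finite_measure.integrable_const)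
      show "AE u in M. (\<lambda>i. q u (X i)) \<longlonglongrightarrow> F' u t"
      proof (rule AE_I2)
        fix u assume u: "u \<in> space M"
        have "((\<lambda>s. (F u s - F u t) / (s - t)) \<longlongrightarrow> F' u t) (at t)"
          using der[OF u t] by (simp add: has_field_derivative_iff)
        moreover have "filterlim X (at t) sequentially"
          using X by (auto simp: filterlim_at)
        ultimately show "(\<lambda>i. q u (X i)) \<longlonglongrightarrow> F' u t"
          unfolding q_def by (rule filterlim_compose)
      qed
      show "AE u in M. norm (q u (X i)) \<le> K" for i
      proof (rule AE_I2)
        fix u assume u: "u \<in> space M"
        have Xi: "a < X i" "X i < b" "X i \<noteq> t" using X(1) by auto
        have "\<bar>F u (max (X i) t) - F u (min (X i) t)\<bar> \<le> K * (max (X i) t - min (X i) t)"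
        proof (rule deriv_bound_diff)
          fix s assume s: "min (X i) t \<le> s" "s \<le> max (X i) t"
          then have "a < s" "s < b" using Xi t by (auto simp: min_def max_def split: if_splits)
          then show "(F u has_real_derivative F' u s) (at s)" "\<bar>F' u s\<bar> \<le> K"
            using der[OF u] bnd[OF u] by auto
        qed simp
        moreover have "\<bar>F u (X i) - F u t\<bar> = \<bar>F u (max (X i) t) - F u (min (X i) t)\<bar>"
          "max (X i) t - min (X i) t = \<bar>X i - t\<bar>"
          by (auto simp: max_def min_def abs_minus_commute)
        ultimately have "\<bar>F u (X i) - F u t\<bar> \<le> K * \<bar>X i - t\<bar>" by simp
        then show "norm (q u (X i)) \<le> K" using Xi
          by (simp add: q_def abs_divide divide_le_eq)
      qed
    qed
    then show "((\<lambda>s. (G s - G t) / (s - t)) \<circ> X) \<longlonglongrightarrow> (\<integral>u. F' u t \<partial>M)"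
      using eq by (simp add: o_def)
  qed
  moreover have "at t within {a<..<b} = at t" using t by (intro at_within_open) auto
  ultimately show ?thesis unfolding G_def[symmetric] by (simp add: has_field_derivative_iff)
qed



lemma meas_psi:
  "(\<lambda>v. psi v x) \<in> borel_measurable borel" "(\<lambda>v. psi1 v x) \<in> borel_measurable borel"
  "(\<lambda>v. psi2 v x) \<in> borel_measurable borel"
  unfolding psi_def psi1_def psi2_def pow0_def by measurable

lemma meas_R:
  fixes f :: "real \<Rightarrow> real"
  assumes f: "f \<in> borel_measurable borel"
  defines "R \<equiv> restrict_space (Pi\<^sub>M UNIV (\<lambda>_. borel)) Delta"
  shows "(\<lambda>u. (\<Sum>i. f (u i)) / sqnorm u) \<in> borel_measurable R"
proof -
  have c: "(\<lambda>u. u i) \<in> borel_measurable R" for i :: nat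
    unfolding R_def by (intro measurable_restrict_space1 measurable_component_singleton) auto
  have "(\<lambda>u. f (u i)) \<in> borel_measurable R" for i
    using measurable_compose[OF c f] by simp
  then have 1: "(\<lambda>u. \<Sum>i. f (u i)) \<in> borel_measurable R" by (rule borel_measurable_suminf)
  have "(\<lambda>u. (u i)\<^sup>2) \<in> borel_measurable R" for i using c by measurable
  then have 2: "sqnorm \<in> borel_measurable R" unfolding sqnorm_def[abs_def] by (rule borel_measurable_suminf)
  show ?thesis using 1 2 by (rule borel_measurable_divide)
qed


lemma sqnorm_nonneg: "u \<in> Delta \<Longrightarrow> 0 \<le> sqnorm u"
  unfolding sqnorm_def using Delta_props(3) by (intro suminf_nonneg) auto

lemma F_bound:
  fixes x0 x1 :: real assumes "0 < x0"
  shows "\<exists>K\<ge>0. \<forall>u\<in>Delta. \<forall>y. x0 \<le> y \<longrightarrow> y \<le> x1 \<longrightarrow>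
     \<bar>S0 u y / sqnorm u\<bar> \<le> K \<and> \<bar>S1 u y / sqnorm u\<bar> \<le> K \<and> \<bar>S2 u y / sqnorm u\<bar> \<le> K"
proof -
  from series_bound[OF assms, of x1] obtain K where K1: "K \<ge> 0" and K2: "\<forall>u\<in>Delta. \<forall>y. x0 \<le> y \<longrightarrow> y \<le> x1 \<longrightarrow>
     summable (\<lambda>i. psi (u i) y) \<and> summable (\<lambda>i. psi1 (u i) y) \<and> summable (\<lambda>i. psi2 (u i) y) \<and>
     \<bar>S0 u y\<bar> \<le> K * sqnorm u \<and> \<bar>S1 u y\<bar> \<le> K * sqnorm u \<and> \<bar>S2 u y\<bar> \<le> K * sqnorm u"
    by (elim exE conjE)
  have dv: "\<bar>s / q\<bar> \<le> K" if "\<bar>s\<bar> \<le> K * q" "0 \<le> q" for s q :: real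
  proof (cases "q = 0")
    case True then show ?thesis using K1 by simp
  next
    case False
    then have "q > 0" using that by simp
    then show ?thesis using that by (simp add: abs_divide divide_le_eq)
  qed
  show ?thesis
  proof (intro exI[of _ K] conjI K1 ballI allI impI)
    fix u y assume u: "u \<in> Delta" and y: "x0 \<le> y" "y \<le> x1"
    from K2 u y have b: "\<bar>S0 u y\<bar> \<le> K * sqnorm u" "\<bar>S1 u y\<bar> \<le> K * sqnorm u" "\<bar>S2 u y\<bar> \<le> K * sqnorm u" by auto
    show "\<bar>S0 u y / sqnorm u\<bar> \<le> K" "\<bar>S1 u y / sqnorm u\<bar> \<le> K" "\<bar>S2 u y / sqnorm u\<bar> \<le> K"
      using dv[OF b(1)] dv[OF b(2)] dv[OF b(3)] sqnorm_nonneg[OF u] by auto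
  qed
qed

lemma partA:
  fixes Xi :: "(nat \<Rightarrow> real) measure"
  assumes fin: "finite_measure Xi" and sp: "space Xi = Delta" and st: "sets Xi = Delta_sets"
  shows "\<exists>g1 g2. (\<forall>x>0. (gamma Xi has_real_derivative g1 x) (at x)) \<and>
    (\<forall>x>0. (g1 has_real_derivative g2 x) (at x)) \<and> (\<forall>x>0. 0 \<le> g2 x) \<and>
    (\<forall>x y. 0 < x \<longrightarrow> x \<le> y \<longrightarrow> g2 y \<le> g2 x)"
proof -
  define a where "a = measure Xi {zero_seq}"
  define F0 where "F0 u x = S0 u x / sqnorm u" for u x
  define F1 where "F1 u x = S1 u x / sqnorm u" for u x
  define F2 where "F2 u x = S2 u x / sqnorm u" for u x
  define R where "R = restrict_space (Pi\<^sub>M UNIV (\<lambda>_. borel :: real measure)) Delta"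
  have mc: "measurable Xi borel = measurable R (borel :: real measure)"
    by (rule measurable_cong_sets) (auto simp: st Delta_sets_def R_def)
  have mF: "(\<lambda>u. F0 u x) \<in> borel_measurable Xi" "(\<lambda>u. F1 u x) \<in> borel_measurable Xi"
    "(\<lambda>u. F2 u x) \<in> borel_measurable Xi" for x
    unfolding mc F0_def F1_def F2_def S0_def S1_def S2_def R_def
    by (intro meas_R meas_psi)+
  have Fb: "\<exists>K\<ge>0. \<forall>u\<in>space Xi. \<forall>y. x0 \<le> y \<longrightarrow> y \<le> x1 \<longrightarrow>
     \<bar>F0 u y\<bar> \<le> K \<and> \<bar>F1 u y\<bar> \<le> K \<and> \<bar>F2 u y\<bar> \<le> K" if "0 < x0" for x0 x1
    using F_bound[OF that, of x1] unfolding sp F0_def F1_def F2_def .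
  have intg: "integrable Xi (\<lambda>u. F0 u y)" "integrable Xi (\<lambda>u. F1 u y)" "integrable Xi (\<lambda>u. F2 u y)"
    if "y > 0" for y
  proof -
    from Fb[OF that, of y] obtain K where K: "\<forall>u\<in>space Xi. \<forall>z. y \<le> z \<longrightarrow> z \<le> y \<longrightarrow>
     \<bar>F0 u z\<bar> \<le> K \<and> \<bar>F1 u z\<bar> \<le> K \<and> \<bar>F2 u z\<bar> \<le> K" by blast
    show "integrable Xi (\<lambda>u. F0 u y)" "integrable Xi (\<lambda>u. F1 u y)" "integrable Xi (\<lambda>u. F2 u y)"
      using K mF by (auto intro!: finite_measure.integrable_const_bound[OF fin, where B = K] AE_I2)
  qed
  have dF: "(F0 u has_real_derivative F1 u x) (at x)" "(F1 u has_real_derivative F2 u x) (at x)"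
    if "u \<in> space Xi" "x > 0" for u x
    using DERIV_cdivide[OF series_deriv(1)[of u x], of "sqnorm u"]
      DERIV_cdivide[OF series_deriv(2)[of u x], of "sqnorm u"] that sp
    by (auto simp: F0_def[abs_def] F1_def[abs_def] F2_def)
  have dI: "((\<lambda>s. \<integral>u. F0 u s \<partial>Xi) has_real_derivative (\<integral>u. F1 u x \<partial>Xi)) (at x)"
       "((\<lambda>s. \<integral>u. F1 u s \<partial>Xi) has_real_derivative (\<integral>u. F2 u x \<partial>Xi)) (at x)" if x: "x > 0" for x
  proof -
    have x2: "0 < x/2" using x by simp
    from Fb[OF x2, of "2*x"] obtain K where K: "\<forall>u\<in>space Xi. \<forall>z. x/2 \<le> z \<longrightarrow> z \<le> 2*x \<longrightarrow>
     \<bar>F0 u z\<bar> \<le> K \<and> \<bar>F1 u z\<bar> \<le> K \<and> \<bar>F2 u z\<bar> \<le> K" by blast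
    show "((\<lambda>s. \<integral>u. F0 u s \<partial>Xi) has_real_derivative (\<integral>u. F1 u x \<partial>Xi)) (at x)"
      by (rule deriv_integral[OF fin, where a = "x/2" and b = "2*x" and K = K])
         (use x K in \<open>auto intro: dF mF intg\<close>)
    show "((\<lambda>s. \<integral>u. F1 u s \<partial>Xi) has_real_derivative (\<integral>u. F2 u x \<partial>Xi)) (at x)"
      by (rule deriv_integral[OF fin, where a = "x/2" and b = "2*x" and K = K])
         (use x K in \<open>auto intro: dF mF intg\<close>)
  qed
  have geq: "gamma Xi = (\<lambda>x. a * (x * (x - 1) / 2) + (\<integral>u. F0 u x \<partial>Xi))"
  proof
    fix x
    have "set_lebesgue_integral Xi (Delta - {zero_seq})
         (\<lambda>u. (\<Sum>i. pow0 (1 - u i) x - 1 + x * u i) / sqnorm u) = (\<integral>u. F0 u x \<partial>Xi)"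
      unfolding set_lebesgue_integral_def
    proof (rule Bochner_Integration.integral_cong[OF refl])
      fix u assume u: "u \<in> space Xi"
      have sz: "sqnorm zero_seq = 0" by (simp add: sqnorm_def zero_seq_def)
      show "indicator (Delta - {zero_seq}) u *\<^sub>R ((\<Sum>i. pow0 (1 - u i) x - 1 + x * u i) / sqnorm u) = F0 u x"
        using u sp by (cases "u = zero_seq") (auto simp: F0_def S0_def psi_def sz)
    qed
    then show "gamma Xi x = a * (x * (x - 1) / 2) + (\<integral>u. F0 u x \<partial>Xi)"
      by (simp add: gamma_def a_def)
  qed
  define g1 where "g1 x = a * (2 * x - 1) / 2 + (\<integral>u. F1 u x \<partial>Xi)" for x
  define g2 where "g2 x = a + (\<integral>u. F2 u x \<partial>Xi)" for x
  have a0: "0 \<le> a" by (simp add: a_def)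
  have F2nn: "0 \<le> F2 u x" if "u \<in> space Xi" "x > 0" for u x
  proof -
    have u: "u \<in> Delta" using that sp by simp
    note D = Delta_props[OF u]
    from series_bound[OF that(2), of x] obtain K where "\<forall>u\<in>Delta. \<forall>y. x \<le> y \<longrightarrow> y \<le> x \<longrightarrow>
     summable (\<lambda>i. psi (u i) y) \<and> summable (\<lambda>i. psi1 (u i) y) \<and> summable (\<lambda>i. psi2 (u i) y) \<and>
     \<bar>S0 u y\<bar> \<le> K * sqnorm u \<and> \<bar>S1 u y\<bar> \<le> K * sqnorm u \<and> \<bar>S2 u y\<bar> \<le> K * sqnorm u" by blast
    then have sm: "summable (\<lambda>i. psi2 (u i) x)" using u by auto
    have "0 \<le> S2 u x" unfolding S2_def using sm by (intro suminf_nonneg) (auto simp: psi2_def)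
    then show ?thesis unfolding F2_def using sqnorm_nonneg[OF u] by simp
  qed
  have F2mono: "F2 u y \<le> F2 u x" if "u \<in> space Xi" "0 < x" "x \<le> y" for u x y
  proof -
    have u: "u \<in> Delta" using that sp by simp
    note D = Delta_props[OF u]
    from series_bound[OF that(2), of y] obtain K where "\<forall>u\<in>Delta. \<forall>z. x \<le> z \<longrightarrow> z \<le> y \<longrightarrow>
     summable (\<lambda>i. psi (u i) z) \<and> summable (\<lambda>i. psi1 (u i) z) \<and> summable (\<lambda>i. psi2 (u i) z) \<and>
     \<bar>S0 u z\<bar> \<le> K * sqnorm u \<and> \<bar>S1 u z\<bar> \<le> K * sqnorm u \<and> \<bar>S2 u z\<bar> \<le> K * sqnorm u" by blast
    then have sm: "summable (\<lambda>i. psi2 (u i) x)" "summable (\<lambda>i. psi2 (u i) y)" using u that by auto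
    have "psi2 (u i) y \<le> psi2 (u i) x" for i
    proof -
      have "(1 - u i) powr y \<le> (1 - u i) powr x" using D(1,2)[of i] that by (intro powr_mono') auto
      then show ?thesis unfolding psi2_def by (intro mult_right_mono) auto
    qed
    then have "S2 u y \<le> S2 u x" unfolding S2_def using sm by (intro suminf_le) auto
    then show ?thesis unfolding F2_def using sqnorm_nonneg[OF u] by (intro divide_right_mono)
  qed
  have r1: "(gamma Xi has_real_derivative g1 x) (at x)" if x: "x > 0" for x
  proof -
    have p: "((\<lambda>x. a * (x * (x - 1) / 2)) has_real_derivative a * (2 * x - 1) / 2) (at x)"
      by (auto intro!: derivative_eq_intros simp: field_simps)
    have "((\<lambda>x. a * (x * (x - 1) / 2) + (\<integral>u. F0 u x \<partial>Xi)) has_real_derivative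
        a * (2 * x - 1) / 2 + (\<integral>u. F1 u x \<partial>Xi)) (at x)"
      by (intro DERIV_add p dI x)
    then show ?thesis unfolding geq g1_def by simp
  qed
  have r2: "(g1 has_real_derivative g2 x) (at x)" if x: "x > 0" for x
  proof -
    have p2: "((\<lambda>x. a * (2 * x - 1) / 2) has_real_derivative a) (at x)"
      by (auto intro!: derivative_eq_intros simp: field_simps)
    have "((\<lambda>x. a * (2 * x - 1) / 2 + (\<integral>u. F1 u x \<partial>Xi)) has_real_derivative
        a + (\<integral>u. F2 u x \<partial>Xi)) (at x)"
      by (intro DERIV_add p2 dI x)
    moreover have "g1 = (\<lambda>x. a * (2 * x - 1) / 2 + (\<integral>u. F1 u x \<partial>Xi))" by (simp add: fun_eq_iff g1_def)
    ultimately show ?thesis by (simp add: g2_def)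
  qed
  have r3: "0 \<le> g2 x" if x: "x > 0" for x
    unfolding g2_def using a0 F2nn x by (auto intro!: add_nonneg_nonneg integral_nonneg_AE AE_I2)
  have r4: "g2 y \<le> g2 x" if xy: "0 < x" "x \<le> y" for x y
  proof -
    have "(\<integral>u. F2 u y \<partial>Xi) \<le> (\<integral>u. F2 u x \<partial>Xi)"
      using xy by (intro integral_mono intg F2mono) auto
    then show "g2 y \<le> g2 x" unfolding g2_def by simp
  qed
  show ?thesis using r1 r2 r3 r4 by blast
qed



theorem mainTheorem2:
  fixes Xi :: "(nat \<Rightarrow> real) measure" and \<kappa> :: real
  assumes "finite_measure Xi"
    and "space Xi = Delta"
    and "sets Xi = Delta_sets"
    and "0 \<le> \<kappa>"
  defines "g \<equiv> gamma Xi"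
  shows "(((\<lambda>x. x * deriv (deriv g) x) \<longlongrightarrow> \<kappa>) at_top
           \<longleftrightarrow> ((\<lambda>x. deriv g x - g x / x) \<longlongrightarrow> \<kappa>) at_top)
       \<and> (((\<lambda>x. deriv g x - g x / x) \<longlongrightarrow> \<kappa>) at_top
           \<longleftrightarrow> (\<exists>L. slowly_varying L \<and> (\<forall>x>0. g x / x = \<kappa> * ln x + ln (L x))))
       \<and> ((\<exists>L. slowly_varying L \<and> (\<forall>x>0. g x / x = \<kappa> * ln x + ln (L x)))
           \<longleftrightarrow> (\<forall>y>0. ((\<lambda>x. g (y * x) / (y * x) - g x / x) \<longlongrightarrow> \<kappa> * ln y) at_top))
       \<and> ((\<forall>y>0. ((\<lambda>x. g (y * x) / (y * x) - g x / x) \<longlongrightarrow> \<kappa> * ln y) at_top)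
           \<longleftrightarrow> (\<forall>y>0. ((\<lambda>x. deriv g (y * x) - deriv g x) \<longlongrightarrow> \<kappa> * ln y) at_top))"
proof -
  obtain g1 g2 where d1: "\<And>x. x > 0 \<Longrightarrow> (g has_real_derivative g1 x) (at x)"
    and d2: "\<And>x. x > 0 \<Longrightarrow> (g1 has_real_derivative g2 x) (at x)"
    and nn: "\<And>x. x > 0 \<Longrightarrow> 0 \<le> g2 x"
    and mono: "\<And>x y. 0 < x \<Longrightarrow> x \<le> y \<Longrightarrow> g2 y \<le> g2 x"
    using partA[OF assms(1-3)] unfolding g_def by blast
  have e1: "deriv g x = g1 x" if "x > 0" for x using d1[OF that] by (rule DERIV_imp_deriv)
  have e2: "deriv (deriv g) x = g2 x" if "x > 0" for x
  proof -
    have "(deriv g has_real_derivative g2 x) (at x)"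
      by (rule has_field_derivative_transform_within_open[OF d2[OF that], where S = "{0<..}"])
         (use that e1 in auto)
    then show ?thesis by (rule DERIV_imp_deriv)
  qed
  have B: ?thesis if "(((\<lambda>x. x * g2 x) \<longlongrightarrow> \<kappa>) at_top
           \<longleftrightarrow> ((\<lambda>x. g1 x - g x / x) \<longlongrightarrow> \<kappa>) at_top)
       \<and> (((\<lambda>x. g1 x - g x / x) \<longlongrightarrow> \<kappa>) at_top
           \<longleftrightarrow> (\<exists>L. slowly_varying L \<and> (\<forall>x>0. g x / x = \<kappa> * ln x + ln (L x))))
       \<and> ((\<exists>L. slowly_varying L \<and> (\<forall>x>0. g x / x = \<kappa> * ln x + ln (L x)))
           \<longleftrightarrow> (\<forall>y>0. ((\<lambda>x. g (y * x) / (y * x) - g x / x) \<longlongrightarrow> \<kappa> * ln y) at_top))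
       \<and> ((\<forall>y>0. ((\<lambda>x. g (y * x) / (y * x) - g x / x) \<longlongrightarrow> \<kappa> * ln y) at_top)
           \<longleftrightarrow> (\<forall>y>0. ((\<lambda>x. g1 (y * x) - g1 x) \<longlongrightarrow> \<kappa> * ln y) at_top))"
  proof -
    have c1: "((\<lambda>x. x * deriv (deriv g) x) \<longlongrightarrow> \<kappa>) at_top \<longleftrightarrow> ((\<lambda>x. x * g2 x) \<longlongrightarrow> \<kappa>) at_top"
      by (rule tendsto_cong) (use eventually_gt_at_top[of 0] in \<open>eventually_elim, simp add: e2\<close>)
    have c2: "((\<lambda>x. deriv g x - g x / x) \<longlongrightarrow> \<kappa>) at_top \<longleftrightarrow> ((\<lambda>x. g1 x - g x / x) \<longlongrightarrow> \<kappa>) at_top"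
      by (rule tendsto_cong) (use eventually_gt_at_top[of 0] in \<open>eventually_elim, simp add: e1\<close>)
    have c5: "((\<lambda>x. deriv g (y * x) - deriv g x) \<longlongrightarrow> \<kappa> * ln y) at_top \<longleftrightarrow>
        ((\<lambda>x. g1 (y * x) - g1 x) \<longlongrightarrow> \<kappa> * ln y) at_top" if y: "y > 0" for y
    proof (rule tendsto_cong)
      show "\<forall>\<^sub>F x in at_top. deriv g (y * x) - deriv g x = g1 (y * x) - g1 x"
        using eventually_gt_at_top[of 0]
      proof eventually_elim
        case (elim x)
        then have "y * x > 0" using y by simp
        then show ?case using elim by (simp add: e1)
      qed
    qed
    show ?thesis using that c1 c2 c5 by auto
  qed
  show ?thesis by (rule B, rule partB[OF assms(4) d1 d2 nn mono])
qed


end
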